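(* Let $\tau(\lambda)$ denote Kendall's tau of the power-divergence copula $C_\lambda$, i.e. $\tau(\lambda)=1+4\int_0^1 \phi_\lambda(s)/\phi_\lambda'(s)\,ds$; explicitly $\tau(\lambda)=1+\frac{2}{\lambda+1}-\frac{4\lambda}{\lambda+1}\int_0^1\frac{s-1}{s^\lambda-1}\,ds$ for $\lambda\ne-1,0$, $\tau(0)=3-4\log 2$, $\tau(-1)=7-2\pi^2/3$. Then $\tau$ is a monotone non-increasing function of $\lambda\in(-\infty,\infty)$.
   Context: For $\lambda\in\mathbb{R}$ define $\phi_\lambda$ on $[0,\infty)$ by $\phi_\lambda(x)=\frac{1}{\lambda(\lambda+1)}(x^{\lambda+1}-x+\lambda(1-x))$ for $\lambda\neq-1,0$; $\phi_0(x)=1-x+x\log x$; $\phi_{-1}(x)=x-1-\log x$; values at $x=0$ are limits, so $\phi_\lambda(0)=1/(\lambda+1)$ for $\lambda>-1$ and $\phi_\lambda(0)=\infty$ for $\lambda\le-1$. On $[0,1]$, $\phi_\lambda$ is convex, strictly decreasing, $\phi_\lambda(1)=0$. The pseudoinverse is $\phi_\lambda^{[-1]}(t)=\phi_\lambda^{-1}(t)$ (inverse of $\phi_\lambda|_{[0,1]}$) for $0\le t<\phi_\lambda(0)$ and $0$ for $t\ge\phi_\lambda(0)$. The power-divergence (PD) copula is $C_\lambda(u_1,u_2)=\phi_\lambda^{[-1]}(\phi_\lambda(u_1)+\phi_\lambda(u_2))$, $u_1,u_2\in[0,1]$ (with $\phi_\lambda^{[-1]}(\infty)=0$). Kendall's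 tau of a copula $C$ is the population Kendall's tau of a random vector with distribution $C$. *)

theory Defs
  imports "HOL-Analysis.Analysis"
begin

text \<open>Only its values on (0,1]
  enter the Kendall's tau formula; at x = 0 the real-valued definition below
  need not agree with the extended-real limit (which may be infinity), but a single point
  does not affect the integral.\<close>
definition pd_phi :: "real \<Rightarrow> real \<Rightarrow> real" where
  "pd_phi lam x =
     (if lam = 0 then 1 - x + x * ln x
      else if lam = -1 then x - 1 - ln x
      else (x powr (lam + 1) - x + lam * (1 - x)) / (lam * (lam + 1)))"

definition pd_tau :: "real \<Rightarrow> real" where
  "pd_tau lam = 1 + 4 * integral {0..1} (\<lambda>s. pd_phi lam s / deriv (pd_phi lam) s)"

end

theory Submission
  imports Defs
begin

definition Dc :: "real \<Rightarrow> real \<Rightarrow> real" where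
  "Dc a s = (if a = 0 then - ln s else (1 - s powr a) / a)"

lemma Dc_int:
  assumes s: "0 < s" "s \<le> 1"
  shows "((\<lambda>v. v powr (a - 1)) has_integral Dc a s) {s..1}"
proof -
  define F where "F = (\<lambda>v::real. if a = 0 then ln v else v powr a / a)"
  have "((\<lambda>v. v powr (a - 1)) has_integral (F 1 - F s)) {s..1}"
  proof (rule fundamental_theorem_of_calculus[OF s(2)])
    fix x assume x: "x \<in> {s..1}"
    then have xp: "x > 0" using s by auto
    have "(F has_real_derivative x powr (a - 1)) (at x)"
    proof (cases "a = 0")
      case True
      then show ?thesis unfolding F_def using xp
        by (auto intro!: derivative_eq_intros simp: powr_neg_one)
    next
      case False
      have "((\<lambda>v. v powr a / a) has_real_derivative (a * x powr (a - 1)) / a) (at x)"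
        using has_real_derivative_powr[OF xp, of a] by (intro DERIV_cdivide)
      then show ?thesis unfolding F_def using False by simp
    qed
    then show "(F has_vector_derivative x powr (a - 1)) (at x within {s..1})"
      by (simp add: has_real_derivative_iff_has_vector_derivative[symmetric] has_field_derivative_at_within)
  qed
  moreover have "F 1 - F s = Dc a s" unfolding F_def Dc_def by (auto simp: diff_divide_distrib)
  ultimately show ?thesis by simp
qed

lemma Dc_pos:
  assumes "0 < s" "s < 1"
  shows "Dc a s > 0"
proof (cases "a = 0")
  case True then show ?thesis using assms by (simp add: Dc_def)
next
  case False
  show ?thesis
  proof (cases "a > 0")
    case True
    have "s powr a < 1 powr a" using assms True by (intro powr_less_mono2) auto
    then show ?thesis using True by (simp add: Dc_def)
  next
    case f: False
    with False have "a < 0" by simp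
    have "1 powr (-a) > s powr (-a)" using assms \<open>a<0\<close> by (intro powr_less_mono2) auto
    then have "s powr a > 1" using assms by (simp add: powr_minus_divide divide_simps)
    then show ?thesis using \<open>a<0\<close> by (simp add: Dc_def divide_simps)
  qed
qed

lemma pd_phi_eq:
  assumes "0 < s"
  shows "pd_phi lam s = Dc (lam + 1) s - s * Dc lam s"
proof -
  consider "lam = 0" | "lam = -1" | "lam \<noteq> 0" "lam \<noteq> -1" by blast
  then show ?thesis
  proof cases
    case 1 then show ?thesis using assms by (simp add: pd_phi_def Dc_def algebra_simps)
  next
    case 2 then show ?thesis using assms by (simp add: pd_phi_def Dc_def powr_neg_one algebra_simps)
  next
    case 3
    then have "lam + 1 \<noteq> 0" by linarith
    have "s powr (lam + 1) = s * s powr lam" using assms by (simp add: powr_add)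
    then show ?thesis using 3 \<open>lam + 1 \<noteq> 0\<close> unfolding pd_phi_def Dc_def
      by (simp add: field_simps)
  qed
qed

lemma pd_phi_deriv:
  assumes "0 < s"
  shows "(pd_phi lam has_real_derivative - Dc lam s) (at s)"
proof -
  consider "lam = 0" | "lam = -1" | "lam \<noteq> 0" "lam \<noteq> -1" by blast
  then show ?thesis
  proof cases
    case 1
    then have e: "pd_phi lam = (\<lambda>x. 1 - x + x * ln x)" by (auto simp: pd_phi_def fun_eq_iff)
    show ?thesis unfolding e using 1 assms by (auto intro!: derivative_eq_intros simp: Dc_def)
  next
    case 2
    then have e: "pd_phi lam = (\<lambda>x. x - 1 - ln x)" by (auto simp: pd_phi_def fun_eq_iff)
    show ?thesis unfolding e using 2 assms by (auto intro!: derivative_eq_intros simp: Dc_def powr_neg_one)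
  next
    case 3
    then have "lam + 1 \<noteq> 0" by linarith
    then have e: "pd_phi lam = (\<lambda>x. (x powr (lam + 1) - x + lam * (1 - x)) / (lam * (lam + 1)))"
      using 3 by (auto simp: pd_phi_def fun_eq_iff)
    have "((\<lambda>x. (x powr (lam + 1) - x + lam * (1 - x)) / (lam * (lam + 1))) has_real_derivative
       ((lam + 1) * s powr (lam + 1 - 1) - 1 + lam * (0 - 1)) / (lam * (lam + 1))) (at s)"
      by (intro DERIV_cdivide DERIV_add DERIV_diff has_real_derivative_powr[OF assms] DERIV_ident DERIV_cmult DERIV_const)
    moreover have "((lam + 1) * s powr (lam + 1 - 1) - 1 + lam * (0 - 1)) / (lam * (lam + 1)) = - Dc lam s"
    proof -
      have "lam * (lam + 1) \<noteq> 0" using 3 \<open>lam + 1 \<noteq> 0\<close> by simp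
      then have "((lam + 1) * s powr (lam + 1 - 1) - 1 + lam * (0 - 1)) / (lam * (lam + 1))
         = (lam + 1) * (s powr lam - 1) / (lam * (lam + 1))" by (simp add: algebra_simps)
      also have "\<dots> = (s powr lam - 1) / lam" using \<open>lam + 1 \<noteq> 0\<close> by simp
      finally show ?thesis using 3 by (simp add: Dc_def minus_divide_left)
    qed
    ultimately show ?thesis unfolding e by simp
  qed
qed

lemma key_ineq:
  assumes s: "0 < s" "s < 1" and lm: "lam < mu"
  shows "Dc (lam + 1) s * Dc mu s \<le> Dc (mu + 1) s * Dc lam s"
proof -
  define c where "c = Dc lam s / Dc mu s"
  have cp: "c > 0" using Dc_pos[OF s] by (simp add: c_def)
  define v0 where "v0 = c powr (-1 / (mu - lam))"
  have v0p: "v0 > 0" using cp by (simp add: v0_def)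
  have v0e: "v0 powr (mu - lam) = 1 / c"
  proof -
    have "v0 powr (mu - lam) = c powr (-1 / (mu - lam) * (mu - lam))" by (simp add: v0_def powr_powr)
    also have "\<dots> = c powr (-1)" using lm by simp
    finally show ?thesis using cp by (simp add: powr_neg_one)
  qed
  have I1: "((\<lambda>v. v powr (lam - 1)) has_integral Dc lam s) {s..1}"
    and I2: "((\<lambda>v. v powr (mu - 1)) has_integral Dc mu s) {s..1}"
    and I3: "((\<lambda>v. v powr (lam + 1 - 1)) has_integral Dc (lam + 1) s) {s..1}"
    and I4: "((\<lambda>v. v powr (mu + 1 - 1)) has_integral Dc (mu + 1) s) {s..1}"
    using Dc_int[OF s(1) less_imp_le[OF s(2)], of lam] Dc_int[OF s(1) less_imp_le[OF s(2)], of mu]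
      Dc_int[OF s(1) less_imp_le[OF s(2)], of "lam+1"] Dc_int[OF s(1) less_imp_le[OF s(2)], of "mu+1"] by auto
  have "((\<lambda>v. c * v powr (mu + 1 - 1) - v powr (lam + 1 - 1) - v0 * (c * v powr (mu - 1) - v powr (lam - 1)))
     has_integral (c * Dc (mu + 1) s - Dc (lam + 1) s - v0 * (c * Dc mu s - Dc lam s))) {s..1}"
    by (intro has_integral_diff has_integral_mult_right I1 I2 I3 I4)
  moreover have "c * Dc mu s - Dc lam s = 0" using Dc_pos[OF s, of mu] by (simp add: c_def)
  ultimately have I: "((\<lambda>v. c * v powr (mu + 1 - 1) - v powr (lam + 1 - 1) - v0 * (c * v powr (mu - 1) - v powr (lam - 1)))
     has_integral (c * Dc (mu + 1) s - Dc (lam + 1) s)) {s..1}" by simp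
  have "0 \<le> c * Dc (mu + 1) s - Dc (lam + 1) s"
  proof (rule has_integral_nonneg[OF I])
    fix v assume "v \<in> {s..1}"
    then have vp: "v > 0" using s by auto
    have eq: "c * v powr (mu + 1 - 1) - v powr (lam + 1 - 1) - v0 * (c * v powr (mu - 1) - v powr (lam - 1))
      = (v - v0) * (v powr (lam - 1) * (c * v powr (mu - lam) - 1))"
    proof -
      have h: "v * v powr (a - 1) = v powr a" for a
      proof -
        have "v powr (1 + (a - 1)) = v powr 1 * v powr (a - 1)" by (rule powr_add)
        then show ?thesis using vp by simp
      qed
      have h2: "v powr (lam - 1) * v powr (mu - lam) = v powr (mu - 1)"
        by (simp flip: powr_add)
      show ?thesis using h[of lam] h[of mu] h2 by (simp add: algebra_simps)
    qed
    have pos: "v powr (lam - 1) > 0" using vp by simp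
    show "0 \<le> c * v powr (mu + 1 - 1) - v powr (lam + 1 - 1) - v0 * (c * v powr (mu - 1) - v powr (lam - 1))"
      unfolding eq
    proof (cases "v \<ge> v0")
      case True
      then have "v powr (mu - lam) \<ge> v0 powr (mu - lam)" using v0p lm by (intro powr_mono2) auto
      then have "c * v powr (mu - lam) \<ge> 1" using v0e cp by (simp add: field_simps)
      then show "0 \<le> (v - v0) * (v powr (lam - 1) * (c * v powr (mu - lam) - 1))"
        using True pos by simp
    next
      case False
      then have "v powr (mu - lam) \<le> v0 powr (mu - lam)" using vp lm by (intro powr_mono2) auto
      then have "c * v powr (mu - lam) \<le> 1" using v0e cp by (simp add: field_simps)
      then show "0 \<le> (v - v0) * (v powr (lam - 1) * (c * v powr (mu - lam) - 1))"
        using False pos by (intro mult_nonpos_nonpos) (auto intro: mult_nonneg_nonpos)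
    qed
  qed
  then show ?thesis using Dc_pos[OF s] by (simp add: c_def field_simps)
qed

definition hh :: "real \<Rightarrow> real \<Rightarrow> real" where
  "hh lam s = s - Dc (lam + 1) s / Dc lam s"

lemma integrand_eq:
  assumes "0 < s" "s < 1"
  shows "pd_phi lam s / deriv (pd_phi lam) s = hh lam s"
proof -
  have d: "deriv (pd_phi lam) s = - Dc lam s" using pd_phi_deriv[OF assms(1)] by (rule DERIV_imp_deriv)
  have "Dc lam s > 0" using Dc_pos[OF assms] .
  then show ?thesis unfolding d pd_phi_eq[OF assms(1)] hh_def by (simp add: field_simps)
qed

lemma hh_bound:
  assumes s: "0 < s" "s < 1"
  shows "\<bar>hh lam s\<bar> \<le> 1"
proof -
  have I1: "((\<lambda>v. v powr (lam - 1)) has_integral Dc lam s) {s..1}"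
    and I3: "((\<lambda>v. v powr (lam + 1 - 1)) has_integral Dc (lam + 1) s) {s..1}"
    using Dc_int[OF s(1) less_imp_le[OF s(2)], of lam] 
      Dc_int[OF s(1) less_imp_le[OF s(2)], of "lam+1"] by auto
  have h: "v * v powr (lam - 1) = v powr lam" if vp: "v > 0" for v
  proof -
    have "v powr (1 + (lam - 1)) = v powr 1 * v powr (lam - 1)" by (rule powr_add)
    then show ?thesis using vp by simp
  qed
  have a: "s * Dc lam s \<le> Dc (lam + 1) s"
  proof (rule has_integral_le[OF has_integral_mult_right[OF I1] I3])
    fix v assume v: "v \<in> {s..1}"
    then have "v > 0" using s by auto
    then show "s * v powr (lam - 1) \<le> v powr (lam + 1 - 1)"
    proof -
      have "s * v powr (lam - 1) \<le> v * v powr (lam - 1)"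
        using v by (intro mult_right_mono) auto
      then show ?thesis using h[OF \<open>v > 0\<close>] by simp
    qed
  qed
  have b: "Dc (lam + 1) s \<le> Dc lam s"
  proof (rule has_integral_le[OF I3 I1])
    fix v assume v: "v \<in> {s..1}"
    then have "v > 0" using s by auto
    then show "v powr (lam + 1 - 1) \<le> v powr (lam - 1)"
    proof -
      have "v * v powr (lam - 1) \<le> 1 * v powr (lam - 1)"
        using v by (intro mult_right_mono) auto
      then show ?thesis using h[OF \<open>v > 0\<close>] by simp
    qed
  qed
  have p: "Dc lam s > 0" using Dc_pos[OF s] .
  then have "s \<le> Dc (lam + 1) s / Dc lam s" "Dc (lam + 1) s / Dc lam s \<le> 1"
    using a b by (auto simp: field_simps)
  then show ?thesis using s unfolding hh_def by auto
qed

lemma Dc_cont: "continuous_on {0<..} (Dc a)"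
proof (cases "a = 0")
  case True
  then have e: "Dc a = (\<lambda>s. - ln s)" by (auto simp: Dc_def fun_eq_iff)
  show ?thesis unfolding e by (intro continuous_intros) auto
next
  case False
  then have e: "Dc a = (\<lambda>s. (1 - s powr a) / a)" by (auto simp: Dc_def fun_eq_iff)
  show ?thesis unfolding e using False by (intro continuous_intros) auto
qed

lemma hh_cont: "continuous_on {0<..<1} (hh lam)"
proof -
  have c1: "continuous_on {0<..<1} (Dc a)" for a
    by (rule continuous_on_subset[OF Dc_cont]) auto
  show ?thesis unfolding hh_def
    by (intro continuous_intros c1) (use Dc_pos[of _ lam] in force)
qed

lemma hh_integrable: "hh lam integrable_on {0<..<1}"
proof (rule measurable_bounded_by_integrable_imp_integrable_real)
  show "hh lam \<in> borel_measurable (lebesgue_on {0<..<1})"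
    by (rule continuous_imp_measurable_on_sets_lebesgue[OF hh_cont]) auto
  show "(\<lambda>_. 1::real) integrable_on {0<..<(1::real)}"
    using integrable_on_Icc_iff_Ioo integrable_const_ivl by blast
  show "\<And>x. x \<in> {0<..<1} \<Longrightarrow> \<bar>hh lam x\<bar> \<le> 1" using hh_bound by auto
qed (auto)

lemma pd_tau_eq: "pd_tau lam = 1 + 4 * integral {0<..<1} (hh lam)"
proof -
  have "integral {0..1} (\<lambda>s. pd_phi lam s / deriv (pd_phi lam) s)
      = integral {0<..<1} (\<lambda>s. pd_phi lam s / deriv (pd_phi lam) s)"
    by (rule integral_open_interval_real)
  also have "\<dots> = integral {0<..<1} (hh lam)"
    by (rule integral_cong) (auto intro: integrand_eq)
  finally show ?thesis unfolding pd_tau_def by simp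
qed

lemma hh_mono:
  assumes s: "0 < s" "s < 1" and lm: "lam \<le> mu"
  shows "hh mu s \<le> hh lam s"
proof (cases "lam = mu")
  case True then show ?thesis by simp
next
  case False
  then have "lam < mu" using lm by simp
  from key_ineq[OF s this] Dc_pos[OF s, of lam] Dc_pos[OF s, of mu]
  show ?thesis unfolding hh_def by (simp add: field_simps)
qed

theorem proposition4:
  shows "antimono pd_tau"
proof (rule antimonoI)
  fix lam mu :: real assume "lam \<le> mu"
  have "integral {0<..<1} (hh mu) \<le> integral {0<..<1} (hh lam)"
    by (rule integral_le[OF hh_integrable hh_integrable]) (use hh_mono \<open>lam \<le> mu\<close> in auto)
  then show "pd_tau mu \<le> pd_tau lam" unfolding pd_tau_eq by simp
qed

end
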